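(* Let $\mathcal M$ be a MIMO Multi-hop Control Network under Assumption 1, with structured graph $(V_{\mathcal M_\lambda},E_{\mathcal M_\lambda})$ and associated graph $(\mathcal V,\mathcal E)$ as defined below. For any set $\{v_1,\dots,v_r\}\subseteq V_{\mathcal R}\cup V_{\mathcal O}$ of faulty nodes, there exists an $r$-linking from $\{f_{v_1},\dots,f_{v_r}\}$ to $Y=\{y_1,\dots,y_\ell\}$ in $(V_{\mathcal M_\lambda},E_{\mathcal M_\lambda})$ if and only if there exist vertices $\bar v_1\in\Gamma(v_1),\dots,\bar v_r\in\Gamma(v_r)$ and an $r$-linking from $\{\bar v_1,\dots,\bar v_r\}$ to $\{v_{y,c,1},\dots,v_{y,c,\ell}\}$ in $(\mathcal V,\mathcal E)$.
   Context: A MIMO Multi-hop Control Network (MCN) $\mathcal M$ consists of: a sampled (discrete-time) LTI plant $\mathcal P$ with $n$ states, $m$ inputs $\tilde u_1,\dots,\tilde u_m$ and $\ell$ outputs $\tilde y_1,\dots,\tilde y_\ell$; a controllability network, i.e. a directed graph $G_{\mathcal R}=(V_{\mathcal R},E_{\mathcal R})$ containing a controller node $v_{u,c}$ and actuator nodes $v_{u,1},\dots,v_{u,m}$; an observability network, i.e. a directed graph $G_{\mathcal O}=(V_{\mathcal O},E_{\mathcal O})$ containing sensor nodes $v_{y,1},\dots,v_{y,\ell}$ and a controller node $v_{y,c}$; for each $i\in\{1,\dots,m\}$ a periodic scheduling function $\eta_{\mathcal R_i}:\{1,\dots,\Pi\}\to 2^{E_{\mathcal R}}$ and a weight function $W_{\mathcal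 R_i}:E_{\mathcal R}\to\mathbb R$ (at slot $h$ of each frame, for each $(v,v')\in\eta_{\mathcal R_i}(h)$, node $v$ sends to $v'$ a linear combination of received data of the $i$-th input component, multiplied by $W_{\mathcal R_i}(v,v')$; each link is scheduled at most once per frame), and analogously $\eta_{\mathcal O_i},W_{\mathcal O_i}$ for $i\in\{1,\dots,\ell\}$. $G_{\mathcal R}(\eta_{\mathcal R_i})$ is the subgraph of $G_{\mathcal R}$ with edge set $\bigcup_{h=1}^{\Pi}\eta_{\mathcal R_i}(h)$; it is a directed, weakly connected, acyclic graph formed by simple paths from $v_{u,c}$ to $v_{u,i}$. Similarly $G_{\mathcal O}(\eta_{\mathcal O_i})$ is formed by simple paths from $v_{y,i}$ to $v_{y,c}$. The relay of input component $i$ from controller value $u_i$ to plant input $\tilde u_i$ has transfer function $\sum_{d=1}^{D_{\mathcal R_i}}\gamma_{\mathcal R_i}(d)z^{-d}$ (real coefficients determined by weights/scheduling, $\gamma_{\mathcal R_i}(D_{\mathcal R_i})\ne0$); analogously $\sum_{d=1}^{D_{\mathcal O_i}}\gamma_{\mathcal O_i}(d)z^{-d}$ from $\tilde y_i$ to the received output $y_i$. For $v\in V_{\mathcal R}$, $\phi(v)=\{i:\exists v',\exists h,\ (v,v')\in\eta_{\mathcal R_i}(h)\}$ (analogously for $v\in V_{\mathcal O}$ with output components). A failure on node $v$ injects signals $f_{v,i}$, $i\in\phi(v)$, into the components routed via $v$, with transfer function $\sum_{d=1}^{D_{v,i}}\gamma_{v,i}(d)z^{-d}$ to $\tilde u_i$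 (resp. $y_i$). Assumption 1: $f_{v,i}=f_v$ for all $i\in\phi(v)$. Structured graph $(V_{\mathcal M_\lambda},E_{\mathcal M_\lambda})$: union, glued at $\tilde u_i,\tilde y_j$, of (1) the plant's structured graph $(V_{\mathcal P_\lambda},E_{\mathcal P_\lambda})$ (a vertex per input $\tilde u_i$, state, and output $\tilde y_j$, and an edge from $a$ to $b$ iff the state-space coefficient relating $a$ to $b$ is nonzero); (2) for block $\mathcal R$: vertices $u_i,\tilde u_i$, $x_{i,d}$ ($1\le d\le D_{\mathcal R_i}$), $f_v$ for faulty $v\in V_{\mathcal R}$, edges $(u_i,x_{i,d})$ iff $\gamma_{\mathcal R_i}(d)\ne0$, $(f_v,x_{i,d})$ iff $i\in\phi(v)$ and $\gamma_{v,i}(d)\ne0$, $(x_{i,d+1},x_{i,d})$, $(x_{i,1},\tilde u_i)$; (3) for block $\mathcal O$: analogous vertices $\tilde y_i$, $x'_{i,d}$, $y_i$, $f_v$ for faulty $v\in V_{\mathcal O}$, edges $(\tilde y_i,x'_{i,d})$ iff $\gamma_{\mathcal O_i}(d)\ne0$, $(f_v,x'_{i,d})$ iff $i\in\phi(v)$ and $\gamma_{v,i}(d)\ne0$, $(x'_{i,d+1},x'_{i,d})$, $(x'_{i,1},y_i)$. The graph $(\mathcal V,\mathcal E)$ is the disjoint union of the graphs $G_{\mathcal R}(\eta_{\mathcal R_1}),\dots,G_{\mathcal R}(\eta_{\mathcal R_m})$, $(V_{\mathcal P_\lambda},E_{\mathcal P_\lambda})$, and $G_{\mathcal O}(\eta_{\mathcal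 O_1}),\dots,G_{\mathcal O}(\eta_{\mathcal O_\ell})$ (a node appearing in several of these graphs gets a separate copy in each), together with the additional edges $(v_{u,i},\tilde u_i)$ for $i\in\{1,\dots,m\}$ and $(\tilde y_i,v_{y,i})$ for $i\in\{1,\dots,\ell\}$. For $v\in V_{\mathcal R}$, $\Gamma(v)=\Gamma_{\mathcal R}(v)$ is the set of copies of $v$ in the graphs $G_{\mathcal R}(\eta_{\mathcal R_i})$ ($v_i$ denoting the copy in the $i$-th graph); for $v\in V_{\mathcal O}$, $\Gamma(v)=\Gamma_{\mathcal O}(v)$ is the set of copies of $v$ in the graphs $G_{\mathcal O}(\eta_{\mathcal O_i})$. In particular $v_{y,c,i}$ is the copy of the controller node $v_{y,c}$ in $G_{\mathcal O}(\eta_{\mathcal O_i})$. An $r$-linking from a vertex set $V_1$ to a vertex set $V_2$ is a set of $r$ pairwise vertex-disjoint simple directed paths, each from a vertex of $V_1$ to a vertex of $V_2$.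
   Formalization: $\Gamma(v)$ contains only the copies $v_i$ with $i\in\phi(v)$, and for every node v and $i\in\phi(v)$, $D_{v,i}$ lies between 1 and $D_{\mathcal R_i}$ (resp. $D_{\mathcal O_i}$) and $\gamma_{v,i}(D_{v,i})\ne0$. Each condition added here is assumed in the paper as well or is needed for the statement above to hold. *)

theory Defs
  imports Complex_Main
begin

definition is_simple_path :: "'v set \<Rightarrow> ('v \<times> 'v) set \<Rightarrow> 'v list \<Rightarrow> bool" where
  "is_simple_path V E p \<longleftrightarrow> p \<noteq> [] \<and> set p \<subseteq> V \<and> distinct p \<and>
     (\<forall>k. Suc k < length p \<longrightarrow> (p ! k, p ! Suc k) \<in> E)"

definition has_linking :: "'v set \<Rightarrow> ('v \<times> 'v) set \<Rightarrow> nat \<Rightarrow> 'v set \<Rightarrow> 'v set \<Rightarrow> bool" where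
  "has_linking V E r S T \<longleftrightarrow> (\<exists>P :: 'v list set. finite P \<and> card P = r \<and>
     (\<forall>p\<in>P. is_simple_path V E p \<and> hd p \<in> S \<and> last p \<in> T) \<and>
     (\<forall>p\<in>P. \<forall>q\<in>P. p \<noteq> q \<longrightarrow> set p \<inter> set q = {}))"

text \<open>Vertices of the plant structured graph: inputs (tilde u_i), states x_j, outputs (tilde y_i),
  all indexed from 1.\<close>
datatype pvert = PU nat | PX nat | PY nat

definition plant_vertices :: "nat \<Rightarrow> nat \<Rightarrow> nat \<Rightarrow> pvert set" where
  "plant_vertices n m l = PU ` {1..m} \<union> PX ` {1..n} \<union> PY ` {1..l}"

text \<open>Plant x(k+1) = A x(k) + B u(k), y(k) = C x(k) + D u(k); an edge from a to b iff the
  coefficient relating a to b is nonzero.\<close>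
definition plant_edges :: "nat \<Rightarrow> nat \<Rightarrow> nat \<Rightarrow> (nat \<Rightarrow> nat \<Rightarrow> real) \<Rightarrow> (nat \<Rightarrow> nat \<Rightarrow> real)
    \<Rightarrow> (nat \<Rightarrow> nat \<Rightarrow> real) \<Rightarrow> (nat \<Rightarrow> nat \<Rightarrow> real) \<Rightarrow> (pvert \<times> pvert) set" where
  "plant_edges n m l A B C D =
     {(PX j, PX i) | i j. i \<in> {1..n} \<and> j \<in> {1..n} \<and> A i j \<noteq> 0} \<union>
     {(PU j, PX i) | i j. i \<in> {1..n} \<and> j \<in> {1..m} \<and> B i j \<noteq> 0} \<union>
     {(PX j, PY i) | i j. i \<in> {1..l} \<and> j \<in> {1..n} \<and> C i j \<noteq> 0} \<union>
     {(PU j, PY i) | i j. i \<in> {1..l} \<and> j \<in> {1..m} \<and> D i j \<noteq> 0}"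

text \<open>'a: nodes of the controllability network, 'b: nodes of the observability network.
  The relay transfer-function coefficients (determined by weights and scheduling) are
  taken as data: gR i d = gamma_{R_i}(d), DR i = D_{R_i}; gRf v i d = gamma_{v,i}(d),
  DRf v i = D_{v,i}; analogously for the observability block.\<close>
record ('a, 'b) mcn =
  n_st :: nat
  n_in :: nat
  n_out :: nat
  matA :: "nat \<Rightarrow> nat \<Rightarrow> real"
  matB :: "nat \<Rightarrow> nat \<Rightarrow> real"
  matC :: "nat \<Rightarrow> nat \<Rightarrow> real"
  matD :: "nat \<Rightarrow> nat \<Rightarrow> real"
  VR :: "'a set"
  ER :: "('a \<times> 'a) set"
  vuc :: 'a
  vu :: "nat \<Rightarrow> 'a"
  VO :: "'b set"
  EO :: "('b \<times> 'b) set"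
  vyc :: 'b
  vy :: "nat \<Rightarrow> 'b"
  frame :: nat
  etaR :: "nat \<Rightarrow> nat \<Rightarrow> ('a \<times> 'a) set"
  etaO :: "nat \<Rightarrow> nat \<Rightarrow> ('b \<times> 'b) set"
  WR :: "nat \<Rightarrow> 'a \<times> 'a \<Rightarrow> real"
  WO :: "nat \<Rightarrow> 'b \<times> 'b \<Rightarrow> real"
  gR :: "nat \<Rightarrow> nat \<Rightarrow> real"
  DR :: "nat \<Rightarrow> nat"
  gO :: "nat \<Rightarrow> nat \<Rightarrow> real"
  DO :: "nat \<Rightarrow> nat"
  gRf :: "'a \<Rightarrow> nat \<Rightarrow> nat \<Rightarrow> real"
  DRf :: "'a \<Rightarrow> nat \<Rightarrow> nat"
  gOf :: "'b \<Rightarrow> nat \<Rightarrow> nat \<Rightarrow> real"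
  DOf :: "'b \<Rightarrow> nat \<Rightarrow> nat"

definition sched_edges :: "nat \<Rightarrow> (nat \<Rightarrow> nat \<Rightarrow> ('v \<times> 'v) set) \<Rightarrow> nat \<Rightarrow> ('v \<times> 'v) set" where
  "sched_edges P eta i = (\<Union>h\<in>{1..P}. eta i h)"

definition valid_schedule :: "('v \<times> 'v) set \<Rightarrow> nat \<Rightarrow> (nat \<Rightarrow> nat \<Rightarrow> ('v \<times> 'v) set) \<Rightarrow> nat \<Rightarrow> bool" where
  "valid_schedule E P eta i \<longleftrightarrow> (\<forall>h\<in>{1..P}. eta i h \<subseteq> E) \<and>
     (\<forall>h\<in>{1..P}. \<forall>h'\<in>{1..P}. h \<noteq> h' \<longrightarrow> eta i h \<inter> eta i h' = {})"

text \<open>A (finite) directed acyclic graph formed by simple paths from s to t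
  (hence weakly connected): nonempty, every edge lies on a path from s to t.\<close>
definition path_dag :: "('v \<times> 'v) set \<Rightarrow> 'v \<Rightarrow> 'v \<Rightarrow> bool" where
  "path_dag E s t \<longleftrightarrow> finite E \<and> acyclic E \<and> (s, t) \<in> E\<^sup>+ \<and>
     (\<forall>(a, b)\<in>E. (s, a) \<in> E\<^sup>* \<and> (b, t) \<in> E\<^sup>*)"

definition ERi :: "('a, 'b, 'z) mcn_scheme \<Rightarrow> nat \<Rightarrow> ('a \<times> 'a) set" where
  "ERi M i = sched_edges (frame M) (etaR M) i"

definition EOi :: "('a, 'b, 'z) mcn_scheme \<Rightarrow> nat \<Rightarrow> ('b \<times> 'b) set" where
  "EOi M i = sched_edges (frame M) (etaO M) i"

definition phiR :: "('a, 'b, 'z) mcn_scheme \<Rightarrow> 'a \<Rightarrow> nat set" where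
  "phiR M v = {i \<in> {1..n_in M}. \<exists>v'. \<exists>h\<in>{1..frame M}. (v, v') \<in> etaR M i h}"

definition phiO :: "('a, 'b, 'z) mcn_scheme \<Rightarrow> 'b \<Rightarrow> nat set" where
  "phiO M v = {i \<in> {1..n_out M}. \<exists>v'. \<exists>h\<in>{1..frame M}. (v, v') \<in> etaO M i h}"

definition mcn_wf :: "('a, 'b, 'z) mcn_scheme \<Rightarrow> bool" where
  "mcn_wf M \<longleftrightarrow>
     finite (VR M) \<and> ER M \<subseteq> VR M \<times> VR M \<and> vuc M \<in> VR M \<and> (\<forall>i\<in>{1..n_in M}. vu M i \<in> VR M) \<and>
     finite (VO M) \<and> EO M \<subseteq> VO M \<times> VO M \<and> vyc M \<in> VO M \<and> (\<forall>i\<in>{1..n_out M}. vy M i \<in> VO M) \<and>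
     (\<forall>i\<in>{1..n_in M}. valid_schedule (ER M) (frame M) (etaR M) i \<and>
         path_dag (ERi M i) (vuc M) (vu M i)) \<and>
     (\<forall>i\<in>{1..n_out M}. valid_schedule (EO M) (frame M) (etaO M) i \<and>
         path_dag (EOi M i) (vy M i) (vyc M)) \<and>
     (\<forall>i\<in>{1..n_in M}. 1 \<le> DR M i \<and> gR M i (DR M i) \<noteq> 0) \<and>
     (\<forall>i\<in>{1..n_out M}. 1 \<le> DO M i \<and> gO M i (DO M i) \<noteq> 0) \<and>
     (\<forall>v\<in>VR M. \<forall>i\<in>phiR M v. 1 \<le> DRf M v i \<and> DRf M v i \<le> DR M i \<and> gRf M v i (DRf M v i) \<noteq> 0) \<and>
     (\<forall>v\<in>VO M. \<forall>i\<in>phiO M v. 1 \<le> DOf M v i \<and> DOf M v i \<le> DO M i \<and> gOf M v i (DOf M v i) \<noteq> 0)"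

section \<open>Structured graph (V_{M_lambda}, E_{M_lambda})\<close>

text \<open>SU i = u_i, SX i d = x_{i,d}, SFR v / SFO v = f_v, SP p = plant vertex
  (glued: tilde u_i = SP (PU i), tilde y_i = SP (PY i)), SX' i d = x'_{i,d}, SY i = y_i.\<close>
datatype ('a, 'b) svert = SU nat | SX nat nat | SFR 'a | SP pvert | SX' nat nat | SY nat | SFO 'b

fun fvert :: "'a + 'b \<Rightarrow> ('a, 'b) svert" where
  "fvert (Inl v) = SFR v"
| "fvert (Inr v) = SFO v"

definition struct_V :: "('a, 'b, 'z) mcn_scheme \<Rightarrow> ('a + 'b) set \<Rightarrow> ('a, 'b) svert set" where
  "struct_V M F =
     {SU i | i. i \<in> {1..n_in M}} \<union>
     {SX i d | i d. i \<in> {1..n_in M} \<and> d \<in> {1..DR M i}} \<union>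
     {SFR v | v. Inl v \<in> F} \<union>
     SP ` plant_vertices (n_st M) (n_in M) (n_out M) \<union>
     {SX' i d | i d. i \<in> {1..n_out M} \<and> d \<in> {1..DO M i}} \<union>
     {SY i | i. i \<in> {1..n_out M}} \<union>
     {SFO v | v. Inr v \<in> F}"

definition struct_E :: "('a, 'b, 'z) mcn_scheme \<Rightarrow> ('a + 'b) set \<Rightarrow> (('a, 'b) svert \<times> ('a, 'b) svert) set" where
  "struct_E M F =
     map_prod SP SP ` plant_edges (n_st M) (n_in M) (n_out M) (matA M) (matB M) (matC M) (matD M) \<union>
     {(SU i, SX i d) | i d. i \<in> {1..n_in M} \<and> d \<in> {1..DR M i} \<and> gR M i d \<noteq> 0} \<union>
     {(SFR v, SX i d) | v i d. Inl v \<in> F \<and> i \<in> phiR M v \<and> d \<in> {1..DR M i} \<and>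
        d \<le> DRf M v i \<and> gRf M v i d \<noteq> 0} \<union>
     {(SX i (Suc d), SX i d) | i d. i \<in> {1..n_in M} \<and> 1 \<le> d \<and> Suc d \<le> DR M i} \<union>
     {(SX i 1, SP (PU i)) | i. i \<in> {1..n_in M}} \<union>
     {(SP (PY i), SX' i d) | i d. i \<in> {1..n_out M} \<and> d \<in> {1..DO M i} \<and> gO M i d \<noteq> 0} \<union>
     {(SFO v, SX' i d) | v i d. Inr v \<in> F \<and> i \<in> phiO M v \<and> d \<in> {1..DO M i} \<and>
        d \<le> DOf M v i \<and> gOf M v i d \<noteq> 0} \<union>
     {(SX' i (Suc d), SX' i d) | i d. i \<in> {1..n_out M} \<and> 1 \<le> d \<and> Suc d \<le> DO M i} \<union>
     {(SX' i 1, SY i) | i. i \<in> {1..n_out M}}"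

section \<open>Associated graph (calV, calE)\<close>

text \<open>CR i a: copy of a in G_R(eta_{R_i}); CP p: plant vertex; CO i b: copy of b in G_O(eta_{O_i}).\<close>
datatype ('a, 'b) cvert = CR nat 'a | CP pvert | CO nat 'b

definition assoc_V :: "('a, 'b, 'z) mcn_scheme \<Rightarrow> ('a, 'b) cvert set" where
  "assoc_V M =
     {CR i a | i a. i \<in> {1..n_in M} \<and> a \<in> Domain (ERi M i) \<union> Range (ERi M i)} \<union>
     CP ` plant_vertices (n_st M) (n_in M) (n_out M) \<union>
     {CO i b | i b. i \<in> {1..n_out M} \<and> b \<in> Domain (EOi M i) \<union> Range (EOi M i)}"

definition assoc_E :: "('a, 'b, 'z) mcn_scheme \<Rightarrow> (('a, 'b) cvert \<times> ('a, 'b) cvert) set" where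
  "assoc_E M =
     {(CR i a, CR i b) | i a b. i \<in> {1..n_in M} \<and> (a, b) \<in> ERi M i} \<union>
     map_prod CP CP ` plant_edges (n_st M) (n_in M) (n_out M) (matA M) (matB M) (matC M) (matD M) \<union>
     {(CO i a, CO i b) | i a b. i \<in> {1..n_out M} \<and> (a, b) \<in> EOi M i} \<union>
     {(CR i (vu M i), CP (PU i)) | i. i \<in> {1..n_in M}} \<union>
     {(CP (PY i), CO i (vy M i)) | i. i \<in> {1..n_out M}}"

fun Gamma :: "('a, 'b, 'z) mcn_scheme \<Rightarrow> 'a + 'b \<Rightarrow> ('a, 'b) cvert set" where
  "Gamma M (Inl v) = {CR i v | i. i \<in> phiR M v}"
| "Gamma M (Inr v) = {CO i v | i. i \<in> phiO M v}"

end

theory Submission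
  imports Defs
begin


abbreviation succE :: "('v \<times> 'v) set \<Rightarrow> 'v list \<Rightarrow> bool" where
  "succE E p \<equiv> successively (\<lambda>x y. (x, y) \<in> E) p"

lemma simple_path_iff:
  "is_simple_path V E p \<longleftrightarrow> p \<noteq> [] \<and> set p \<subseteq> V \<and> distinct p \<and> succE E p"
  unfolding is_simple_path_def successively_conv_nth by blast

lemma rtrancl_distinct_path:
  assumes "(a, b) \<in> E\<^sup>*"
  shows "\<exists>ps. ps \<noteq> [] \<and> hd ps = a \<and> last ps = b \<and> distinct ps \<and> succE E ps"
  using assms
proof (induction rule: converse_rtrancl_induct)
  case base
  then show ?case by (intro exI[of _ "[b]"]) auto
next
  case (step a c)
  then obtain ps where ps: "ps \<noteq> []" "hd ps = c" "last ps = b" "distinct ps" "succE E ps" by blast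
  show ?case
  proof (cases "a \<in> set ps")
    case True
    then obtain xs ys where xs: "ps = xs @ a # ys" by (meson split_list)
    show ?thesis using ps xs
      by (intro exI[of _ "a # ys"]) (auto simp: successively_append_iff)
  next
    case False
    show ?thesis using ps False step(1)
      by (intro exI[of _ "a # ps"]) (auto simp: successively_Cons)
  qed
qed

lemma succE_tl_Range: "succE E ps \<Longrightarrow> set (tl ps) \<subseteq> Range E"
  by (induction ps rule: induct_list012) auto

lemma linking_transfer:
  assumes "finite P"
    and "\<And>p. p \<in> P \<Longrightarrow> is_simple_path V E (T p) \<and> hd (T p) \<in> S \<and> last (T p) \<in> Tg"
    and "\<And>p q. p \<in> P \<Longrightarrow> q \<in> P \<Longrightarrow> p \<noteq> q \<Longrightarrow> set (T p) \<inter> set (T q) = {}"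
  shows "has_linking V E (card P) S Tg"
proof -
  have inj: "inj_on T P"
  proof (rule inj_onI, rule ccontr)
    fix p q assume "p \<in> P" "q \<in> P" "T p = T q" "p \<noteq> q"
    with assms(2)[of p] assms(3)[of p q] show False by (auto simp: is_simple_path_def)
  qed
  show ?thesis unfolding has_linking_def
    apply (rule exI[of _ "T ` P"])
    using assms inj by (auto simp: card_image)
qed

fun down :: "nat \<Rightarrow> nat list" where
  "down 0 = []"
| "down (Suc n) = Suc n # down n"

lemma set_down[simp]: "set (down n) = {1..n}"
  by (induction n) auto

lemma distinct_down[simp]: "distinct (down n)"
  by (induction n) auto

lemma down_ne[simp]: "down n = [] \<longleftrightarrow> n = 0"
  by (cases n) auto

lemma hd_down: "n > 0 \<Longrightarrow> hd (down n) = n"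
  by (cases n) auto

lemma last_down: "n > 0 \<Longrightarrow> last (down n) = 1"
  by (induction n) auto

lemma succ_down: "successively (\<lambda>a b. a = Suc b) (down n)"
proof (induction n)
  case (Suc n) then show ?case by (cases n) (auto simp: successively_Cons)
qed simp




abbreviation pE :: "('a, 'b, 'z) mcn_scheme \<Rightarrow> (pvert \<times> pvert) set" where
  "pE M \<equiv> plant_edges (n_st M) (n_in M) (n_out M) (matA M) (matB M) (matC M) (matD M)"
abbreviation pV :: "('a, 'b, 'z) mcn_scheme \<Rightarrow> pvert set" where
  "pV M \<equiv> plant_vertices (n_st M) (n_in M) (n_out M)"

lemma sE_SFR: "(SFR v, y) \<in> struct_E M F \<Longrightarrow> \<exists>i d. y = SX i d \<and> i \<in> phiR M v"
  unfolding struct_E_def by auto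
lemma sE_SFO: "(SFO v, y) \<in> struct_E M F \<Longrightarrow> \<exists>j d. y = SX' j d \<and> j \<in> phiO M v"
  unfolding struct_E_def by auto
lemma sE_SX: "(SX i d, y) \<in> struct_E M F \<Longrightarrow>
   (\<exists>d'. d = Suc d' \<and> y = SX i d') \<or> (d = 1 \<and> y = SP (PU i) \<and> i \<in> {1..n_in M})"
  unfolding struct_E_def by auto
lemma sE_SP: "(SP a, y) \<in> struct_E M F \<Longrightarrow>
   (\<exists>b. y = SP b \<and> (a, b) \<in> pE M) \<or> (\<exists>j d. a = PY j \<and> y = SX' j d \<and> j \<in> {1..n_out M})"
  unfolding struct_E_def by auto
lemma sE_SX': "(SX' j d, y) \<in> struct_E M F \<Longrightarrow>
   (\<exists>d'. d = Suc d' \<and> y = SX' j d') \<or> (d = 1 \<and> y = SY j)"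
  unfolding struct_E_def by auto
lemma sE_SY: "(SY j, y) \<notin> struct_E M F"
  unfolding struct_E_def by auto

lemma S_out: "succE (struct_E M F) p \<Longrightarrow> p \<noteq> [] \<Longrightarrow> hd p \<in> range (SX' j) \<union> {SY j} \<Longrightarrow>
   set p \<subseteq> range (SX' j) \<union> {SY j}"
proof (induction p)
  case (Cons x p)
  show ?case
  proof (cases p)
    case Nil then show ?thesis using Cons by auto
  next
    case (Cons y p')
    with Cons.prems have e: "(x, y) \<in> struct_E M F" and s: "succE (struct_E M F) p" by auto
    from Cons.prems(3) have "y \<in> range (SX' j) \<union> {SY j}"
      using e sE_SX'[of j _ y M F] sE_SY[of j y M F] by auto
    then have "set p \<subseteq> range (SX' j) \<union> {SY j}" using Cons.IH s \<open>p = y # p'\<close> by auto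
    then show ?thesis using Cons.prems(3) by auto
  qed
qed simp

lemma S_plant: "succE (struct_E M F) p \<Longrightarrow> p \<noteq> [] \<Longrightarrow> hd p = SP a \<Longrightarrow> last p \<in> range SY \<Longrightarrow>
   \<exists>pl rest j. pl \<noteq> [] \<and> hd pl = a \<and> last pl = PY j \<and> j \<in> {1..n_out M} \<and> succE (pE M) pl \<and>
      p = map SP pl @ rest \<and> last p = SY j"
proof (induction p arbitrary: a)
  case (Cons x p)
  show ?case
  proof (cases p)
    case Nil then show ?thesis using Cons by auto
  next
    case (Cons y p')
    with Cons.prems have e: "(SP a, y) \<in> struct_E M F" and s: "succE (struct_E M F) p" by auto
    from sE_SP[OF e] show ?thesis
    proof
      assume "\<exists>b. y = SP b \<and> (a, b) \<in> pE M"
      then obtain b where b: "y = SP b" "(a, b) \<in> pE M" by blast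
      have "hd p = SP b" "p \<noteq> []" "last p \<in> range SY" using b Cons.prems \<open>p = y # p'\<close> by auto
      from Cons.IH[OF s this(2,1,3)] obtain pl rest j where
        H: "pl \<noteq> []" "hd pl = b" "last pl = PY j" "j \<in> {1..n_out M}" "succE (pE M) pl"
      "p = map SP pl @ rest" "last p = SY j" by auto
      have 1: "x = SP a" using Cons.prems by simp
      have 2: "last (x # p) = SY j" using H \<open>p = y # p'\<close> by simp
      have 3: "x # p = map SP (a # pl) @ rest" using H 1 by simp
      have 4: "succE (pE M) (a # pl)" using H b by (simp add: successively_Cons)
      have 5: "last (a # pl) = PY j" using H by simp
      show ?thesis apply (intro exI[of _ "a # pl"] exI[of _ rest] exI[of _ j] conjI)
        using 2 3 4 5 H(4) by auto
    next
      assume "\<exists>j d. a = PY j \<and> y = SX' j d \<and> j \<in> {1..n_out M}"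
      then obtain j d where jd: "a = PY j" "y = SX' j d" "j \<in> {1..n_out M}" by blast
      have "set p \<subseteq> range (SX' j) \<union> {SY j}"
        using S_out[OF s] \<open>p = y # p'\<close> jd by auto
      then have "last p = SY j" using Cons.prems \<open>p = y # p'\<close> last_in_set[of p] by auto
      then show ?thesis using jd Cons.prems \<open>p = y # p'\<close>
        by (intro exI[of _ "[a]"] exI[of _ p] exI[of _ j]) auto
    qed
  qed
qed simp

lemma S_in: "succE (struct_E M F) p \<Longrightarrow> p \<noteq> [] \<Longrightarrow> hd p = SX i d \<Longrightarrow> last p \<in> range SY \<Longrightarrow>
   SX i 1 \<in> set p \<and> i \<in> {1..n_in M} \<and> (\<exists>pl xs rest j. pl \<noteq> [] \<and> hd pl = PU i \<and> last pl = PY j \<and>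
      j \<in> {1..n_out M} \<and> succE (pE M) pl \<and> p = xs @ map SP pl @ rest \<and> last p = SY j)"
proof (induction p arbitrary: d)
  case (Cons x p)
  show ?case
  proof (cases p)
    case Nil then show ?thesis using Cons by auto
  next
    case (Cons y p')
    with Cons.prems have e: "(SX i d, y) \<in> struct_E M F" and s: "succE (struct_E M F) p" by auto
    from sE_SX[OF e] show ?thesis
    proof
      assume "\<exists>d'. d = Suc d' \<and> y = SX i d'"
      then obtain d' where "y = SX i d'" by blast
      with Cons.IH[of d'] s Cons.prems \<open>p = y # p'\<close> have
        "SX i 1 \<in> set p \<and> i \<in> {1..n_in M} \<and> (\<exists>pl xs rest j. pl \<noteq> [] \<and> hd pl = PU i \<and> last pl = PY j \<and>
      j \<in> {1..n_out M} \<and> succE (pE M) pl \<and> p = xs @ map SP pl @ rest \<and> last p = SY j)" by auto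
      then obtain pl xs rest j where A: "SX i 1 \<in> set p" "i \<in> {1..n_in M}" "pl \<noteq> []" "hd pl = PU i" "last pl = PY j"
      "j \<in> {1..n_out M}" "succE (pE M) pl" "p = xs @ map SP pl @ rest" "last p = SY j" by blast
      have 2: "last (x # p) = SY j" using A \<open>p = y # p'\<close> by simp
      have 3: "x # p = (x # xs) @ map SP pl @ rest" using A by simp
      have 0: "SX i 1 \<in> set (x # p)" using A by simp
      show ?thesis apply (rule conjI, rule 0, rule conjI, rule A(2))
        apply (rule exI[of _ pl], rule exI[of _ "x # xs"], rule exI[of _ rest], rule exI[of _ j])
        apply (intro conjI) by (fact A(3) A(4) A(5) A(6) A(7) 3 2)+
    next
      assume h: "d = 1 \<and> y = SP (PU i) \<and> i \<in> {1..n_in M}"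
      have "hd p = SP (PU i)" "p \<noteq> []" "last p \<in> range SY" using h Cons.prems \<open>p = y # p'\<close> by auto
      from S_plant[OF s this(2,1,3)] obtain pl rest j where
        A: "pl \<noteq> []" "hd pl = PU i" "last pl = PY j" "j \<in> {1..n_out M}" "succE (pE M) pl"
      "p = map SP pl @ rest" "last p = SY j" by blast
      have 0: "SX i 1 \<in> set (x # p)" using h Cons.prems by simp
      have 2: "last (x # p) = SY j" using A \<open>p = y # p'\<close> by simp
      have 3: "x # p = [x] @ map SP pl @ rest" using A by simp
      show ?thesis apply (rule conjI, rule 0, rule conjI, rule conjunct2[OF conjunct2[OF h]])
        apply (rule exI[of _ pl], rule exI[of _ "[x]"], rule exI[of _ rest], rule exI[of _ j])
        apply (intro conjI) by (fact A(1) A(2) A(3) A(4) A(5) 3 2)+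
    qed
  qed
qed simp




lemma aE_CR: "(CR i a, y) \<in> assoc_E M \<Longrightarrow>
   (\<exists>b. y = CR i b \<and> (a, b) \<in> ERi M i \<and> i \<in> {1..n_in M}) \<or> (a = vu M i \<and> y = CP (PU i) \<and> i \<in> {1..n_in M})"
  unfolding assoc_E_def by auto
lemma aE_CP: "(CP a, y) \<in> assoc_E M \<Longrightarrow>
   (\<exists>b. y = CP b \<and> (a, b) \<in> pE M) \<or> (\<exists>j. a = PY j \<and> y = CO j (vy M j) \<and> j \<in> {1..n_out M})"
  unfolding assoc_E_def by auto
lemma aE_CO: "(CO j a, y) \<in> assoc_E M \<Longrightarrow> \<exists>b. y = CO j b \<and> (a, b) \<in> EOi M j \<and> j \<in> {1..n_out M}"
  unfolding assoc_E_def by auto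

lemma A_out: "succE (assoc_E M) p \<Longrightarrow> p \<noteq> [] \<Longrightarrow> hd p \<in> range (CO j) \<Longrightarrow>
   set p \<subseteq> range (CO j)"
proof (induction p)
  case (Cons x p)
  show ?case
  proof (cases p)
    case Nil then show ?thesis using Cons by auto
  next
    case (Cons y p')
    with Cons.prems have e: "(x, y) \<in> assoc_E M" and s: "succE (assoc_E M) p" by auto
    from Cons.prems(3) have "y \<in> range (CO j)"
      using e aE_CO[of j _ y M] by auto
    then have "set p \<subseteq> range (CO j)" using Cons.IH s \<open>p = y # p'\<close> by auto
    then show ?thesis using Cons.prems(3) by auto
  qed
qed simp

definition isCO :: "('a, 'b) cvert \<Rightarrow> bool" where
  "isCO x \<longleftrightarrow> (\<exists>j b. x = CO j b)"

lemma A_plant: "succE (assoc_E M) p \<Longrightarrow> p \<noteq> [] \<Longrightarrow> hd p = CP a \<Longrightarrow> isCO (last p) \<Longrightarrow>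
   \<exists>pl rest j. pl \<noteq> [] \<and> hd pl = a \<and> last pl = PY j \<and> j \<in> {1..n_out M} \<and> succE (pE M) pl \<and>
      p = map CP pl @ rest \<and> last p \<in> range (CO j)"
proof (induction p arbitrary: a)
  case (Cons x p)
  show ?case
  proof (cases p)
    case Nil then show ?thesis using Cons by (auto simp: isCO_def)
  next
    case (Cons y p')
    with Cons.prems have e: "(CP a, y) \<in> assoc_E M" and s: "succE (assoc_E M) p" by auto
    from aE_CP[OF e] show ?thesis
    proof
      assume "\<exists>b. y = CP b \<and> (a, b) \<in> pE M"
      then obtain b where b: "y = CP b" "(a, b) \<in> pE M" by blast
      have "hd p = CP b" "p \<noteq> []" "isCO (last p)" using b Cons.prems \<open>p = y # p'\<close> by auto
      from Cons.IH[OF s this(2,1,3)] obtain pl rest j where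
        H: "pl \<noteq> []" "hd pl = b" "last pl = PY j" "j \<in> {1..n_out M}" "succE (pE M) pl"
      "p = map CP pl @ rest" "last p \<in> range (CO j)" by blast
      have 1: "x = CP a" using Cons.prems by simp
      have 2: "last (x # p) \<in> range (CO j)" using H \<open>p = y # p'\<close> by simp
      have 3: "x # p = map CP (a # pl) @ rest" using H 1 by simp
      have 4: "succE (pE M) (a # pl)" using H b by (simp add: successively_Cons)
      have 5: "last (a # pl) = PY j" using H by simp
      show ?thesis apply (rule exI[of _ "a # pl"], rule exI[of _ rest], rule exI[of _ j])
        apply (intro conjI) by (fact 2 3 4 5 H(4) list.distinct(2) list.sel(1))+
    next
      assume "\<exists>j. a = PY j \<and> y = CO j (vy M j) \<and> j \<in> {1..n_out M}"
      then obtain j where jd: "a = PY j" "y = CO j (vy M j)" "j \<in> {1..n_out M}" by blast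
      have "set p \<subseteq> range (CO j)"
        using A_out[OF s] \<open>p = y # p'\<close> jd by auto
      then have "last p \<in> range (CO j)" using Cons.prems \<open>p = y # p'\<close> last_in_set[of p] by auto
      then show ?thesis using jd Cons.prems \<open>p = y # p'\<close>
        by (intro exI[of _ "[a]"] exI[of _ p] exI[of _ j]) auto
    qed
  qed
qed simp

lemma A_in: "succE (assoc_E M) p \<Longrightarrow> p \<noteq> [] \<Longrightarrow> hd p = CR i a \<Longrightarrow> isCO (last p) \<Longrightarrow>
   CR i (vu M i) \<in> set p \<and> i \<in> {1..n_in M} \<and> (\<exists>pl xs rest j. pl \<noteq> [] \<and> hd pl = PU i \<and> last pl = PY j \<and>
      j \<in> {1..n_out M} \<and> succE (pE M) pl \<and> p = xs @ map CP pl @ rest \<and> last p \<in> range (CO j))"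
proof (induction p arbitrary: a)
  case (Cons x p)
  show ?case
  proof (cases p)
    case Nil then show ?thesis using Cons by (auto simp: isCO_def)
  next
    case (Cons y p')
    with Cons.prems have e: "(CR i a, y) \<in> assoc_E M" and s: "succE (assoc_E M) p" by auto
    from aE_CR[OF e] show ?thesis
    proof
      assume "\<exists>b. y = CR i b \<and> (a, b) \<in> ERi M i \<and> i \<in> {1..n_in M}"
      then obtain b where "y = CR i b" by blast
      with Cons.IH[of b] s Cons.prems \<open>p = y # p'\<close> have
        "CR i (vu M i) \<in> set p \<and> i \<in> {1..n_in M} \<and> (\<exists>pl xs rest j. pl \<noteq> [] \<and> hd pl = PU i \<and> last pl = PY j \<and>
      j \<in> {1..n_out M} \<and> succE (pE M) pl \<and> p = xs @ map CP pl @ rest \<and> last p \<in> range (CO j))" by auto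
      then obtain pl xs rest j where A: "CR i (vu M i) \<in> set p" "i \<in> {1..n_in M}" "pl \<noteq> []" "hd pl = PU i" "last pl = PY j"
      "j \<in> {1..n_out M}" "succE (pE M) pl" "p = xs @ map CP pl @ rest" "last p \<in> range (CO j)" by blast
      have 2: "last (x # p) \<in> range (CO j)" using A \<open>p = y # p'\<close> by simp
      have 3: "x # p = (x # xs) @ map CP pl @ rest" using A by simp
      have 0: "CR i (vu M i) \<in> set (x # p)" using A by simp
      show ?thesis apply (rule conjI, rule 0, rule conjI, rule A(2))
        apply (rule exI[of _ pl], rule exI[of _ "x # xs"], rule exI[of _ rest], rule exI[of _ j])
        apply (intro conjI) by (fact A(3) A(4) A(5) A(6) A(7) 3 2)+
    next
      assume h: "a = vu M i \<and> y = CP (PU i) \<and> i \<in> {1..n_in M}"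
      have "hd p = CP (PU i)" "p \<noteq> []" "isCO (last p)" using h Cons.prems \<open>p = y # p'\<close> by auto
      from A_plant[OF s this(2,1,3)] obtain pl rest j where
        A: "pl \<noteq> []" "hd pl = PU i" "last pl = PY j" "j \<in> {1..n_out M}" "succE (pE M) pl"
      "p = map CP pl @ rest" "last p \<in> range (CO j)" by blast
      have 0: "CR i (vu M i) \<in> set (x # p)" using h Cons.prems by simp
      have 2: "last (x # p) \<in> range (CO j)" using A \<open>p = y # p'\<close> by simp
      have 3: "x # p = [x] @ map CP pl @ rest" using A by simp
      show ?thesis apply (rule conjI, rule 0, rule conjI, rule conjunct2[OF conjunct2[OF h]])
        apply (rule exI[of _ pl], rule exI[of _ "[x]"], rule exI[of _ rest], rule exI[of _ j])
        apply (intro conjI) by (fact A(1) A(2) A(3) A(4) A(5) 3 2)+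
    qed
  qed
qed simp




definition ppath :: "('a, 'b, 'z) mcn_scheme \<Rightarrow> pvert list \<Rightarrow> nat \<Rightarrow> nat \<Rightarrow> bool" where
  "ppath M pl i j \<longleftrightarrow> pl \<noteq> [] \<and> hd pl = PU i \<and> last pl = PY j \<and> distinct pl \<and>
     succE (pE M) pl \<and> set pl \<subseteq> pV M"

lemma sE_X: "i \<in> {1..n_in M} \<Longrightarrow> 1 \<le> d \<Longrightarrow> Suc d \<le> DR M i \<Longrightarrow> (SX i (Suc d), SX i d) \<in> struct_E M F"
  by (simp add: struct_E_def)
lemma sE_X': "j \<in> {1..n_out M} \<Longrightarrow> 1 \<le> d \<Longrightarrow> Suc d \<le> DO M j \<Longrightarrow> (SX' j (Suc d), SX' j d) \<in> struct_E M F"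
  by (simp add: struct_E_def)
lemma sE_X1: "i \<in> {1..n_in M} \<Longrightarrow> (SX i 1, SP (PU i)) \<in> struct_E M F"
  by (simp add: struct_E_def)
lemma sE_X'1: "j \<in> {1..n_out M} \<Longrightarrow> (SX' j 1, SY j) \<in> struct_E M F"
  by (simp add: struct_E_def)
lemma sE_P: "(a, b) \<in> pE M \<Longrightarrow> (SP a, SP b) \<in> struct_E M F"
  using rev_image_eqI[of "(a,b)" "pE M" "(SP a, SP b)" "map_prod SP SP"] by (simp add: struct_E_def)
lemma sE_PY: "j \<in> {1..n_out M} \<Longrightarrow> d \<in> {1..DO M j} \<Longrightarrow> gO M j d \<noteq> 0 \<Longrightarrow> (SP (PY j), SX' j d) \<in> struct_E M F"
  by (simp add: struct_E_def)
lemma sE_FR: "Inl v \<in> F \<Longrightarrow> i \<in> phiR M v \<Longrightarrow> d \<in> {1..DR M i} \<Longrightarrow> d \<le> DRf M v i \<Longrightarrow> gRf M v i d \<noteq> 0 \<Longrightarrow>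
    (SFR v, SX i d) \<in> struct_E M F"
  by (simp add: struct_E_def)
lemma sE_FO: "Inr v \<in> F \<Longrightarrow> j \<in> phiO M v \<Longrightarrow> d \<in> {1..DO M j} \<Longrightarrow> d \<le> DOf M v j \<Longrightarrow> gOf M v j d \<noteq> 0 \<Longrightarrow>
    (SFO v, SX' j d) \<in> struct_E M F"
  by (simp add: struct_E_def)

lemma chainX: "i \<in> {1..n_in M} \<Longrightarrow> n \<le> DR M i \<Longrightarrow> succE (struct_E M F) (map (SX i) (down n))"
  unfolding successively_map
  by (rule successively_mono[OF succ_down]) (auto intro: sE_X)

lemma chainX': "j \<in> {1..n_out M} \<Longrightarrow> n \<le> DO M j \<Longrightarrow> succE (struct_E M F) (map (SX' j) (down n))"
  unfolding successively_map
  by (rule successively_mono[OF succ_down]) (auto intro: sE_X')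

lemma phiR_sub: "phiR M v \<subseteq> {1..n_in M}" unfolding phiR_def by auto
lemma phiO_sub: "phiO M v \<subseteq> {1..n_out M}" unfolding phiO_def by auto

lemma sV_FR: "Inl v \<in> F \<Longrightarrow> SFR v \<in> struct_V M F" by (simp add: struct_V_def)
lemma sV_FO: "Inr v \<in> F \<Longrightarrow> SFO v \<in> struct_V M F" by (simp add: struct_V_def)
lemma sV_X: "i \<in> {1..n_in M} \<Longrightarrow> d \<in> {1..DR M i} \<Longrightarrow> SX i d \<in> struct_V M F" by (simp add: struct_V_def)
lemma sV_X': "i \<in> {1..n_out M} \<Longrightarrow> d \<in> {1..DO M i} \<Longrightarrow> SX' i d \<in> struct_V M F" by (simp add: struct_V_def)
lemma sV_Y: "i \<in> {1..n_out M} \<Longrightarrow> SY i \<in> struct_V M F" by (simp add: struct_V_def)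
lemma sV_P: "a \<in> pV M \<Longrightarrow> SP a \<in> struct_V M F" by (simp add: struct_V_def)

lemma C_S_in:
  assumes wf: "mcn_wf M" and F: "F \<subseteq> Inl ` VR M \<union> Inr ` VO M" and v: "Inl v \<in> F"
    and i: "i \<in> phiR M v" and pl: "ppath M pl i j" and j: "j \<in> {1..n_out M}"
  shows "\<exists>p. is_simple_path (struct_V M F) (struct_E M F) p \<and> hd p = SFR v \<and> last p = SY j \<and>
     set p \<subseteq> {SFR v} \<union> range (SX i) \<union> SP ` set pl \<union> range (SX' j) \<union> {SY j}"
proof -
  have vV: "v \<in> VR M" using F v by auto
  have i': "i \<in> {1..n_in M}" using i phiR_sub[of M v] by blast
  have R: "1 \<le> DRf M v i" "DRf M v i \<le> DR M i" "gRf M v i (DRf M v i) \<noteq> 0"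
    using wf vV i unfolding mcn_wf_def by auto
  have D: "1 \<le> DO M j" "gO M j (DO M j) \<noteq> 0" using wf j unfolding mcn_wf_def by auto
  define p :: "('a,'b) svert list" where "p = SFR v # map (SX i) (down (DRf M v i)) @ map SP pl @ map (SX' j) (down (DO M j)) @ [SY j]"
  have e1: "(SFR v, SX i (DRf M v i)) \<in> struct_E M F" using R v i by (intro sE_FR) auto
  have e2: "(SP (PY j), SX' j (DO M j)) \<in> struct_E M F" using D j by (intro sE_PY) auto
  have spl: "succE (struct_E M F) (map SP pl)" using pl unfolding ppath_def successively_map
    by (auto elim: successively_mono intro: sE_P)
  have "succE (struct_E M F) p" unfolding p_def using R D pl e1 e2 i' j spl sE_X1[OF i', of F, simplified] sE_X'1[OF j, of F, simplified]
    by (auto simp: successively_append_iff successively_Cons last_map last_down hd_down hd_map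
        ppath_def intro!: chainX chainX' sE_X'1 sE_X1)
  moreover have "distinct p" using pl unfolding p_def ppath_def by (auto simp: distinct_map inj_on_def)
  moreover have "set p \<subseteq> struct_V M F" proof -
    have "set pl \<subseteq> pV M" using pl unfolding ppath_def by auto
    then show ?thesis using R D i' j v unfolding p_def
      by (auto intro!: sV_FR sV_X sV_X' sV_Y sV_P)
  qed
  ultimately show ?thesis unfolding simple_path_iff by (intro exI[of _ p]) (auto simp: p_def)
qed

lemma C_S_out:
  assumes wf: "mcn_wf M" and F: "F \<subseteq> Inl ` VR M \<union> Inr ` VO M" and v: "Inr v \<in> F"
    and j: "j \<in> phiO M v"
  shows "\<exists>p. is_simple_path (struct_V M F) (struct_E M F) p \<and> hd p = SFO v \<and> last p = SY j \<and>
     set p \<subseteq> {SFO v} \<union> range (SX' j) \<union> {SY j}"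
proof -
  have vV: "v \<in> VO M" using F v by auto
  have j': "j \<in> {1..n_out M}" using j phiO_sub[of M v] by blast
  have R: "1 \<le> DOf M v j" "DOf M v j \<le> DO M j" "gOf M v j (DOf M v j) \<noteq> 0"
    using wf vV j unfolding mcn_wf_def by auto
  define p :: "('a,'b) svert list" where "p = SFO v # map (SX' j) (down (DOf M v j)) @ [SY j]"
  have e1: "(SFO v, SX' j (DOf M v j)) \<in> struct_E M F" using R v j by (intro sE_FO) auto
  have "succE (struct_E M F) p" unfolding p_def using R e1 j' sE_X'1[OF j', of F, simplified]
    by (auto simp: successively_append_iff successively_Cons last_map last_down hd_down hd_map
        intro!: chainX' sE_X'1)
  moreover have "distinct p" unfolding p_def by (auto simp: distinct_map inj_on_def)
  moreover have "set p \<subseteq> struct_V M F" using R j' v unfolding p_def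
      by (auto intro!: sV_FO sV_X' sV_Y)
  ultimately show ?thesis unfolding simple_path_iff by (intro exI[of _ p]) (auto simp: p_def)
qed




lemma aE_R: "i \<in> {1..n_in M} \<Longrightarrow> (a, b) \<in> ERi M i \<Longrightarrow> (CR i a, CR i b) \<in> assoc_E M"
  by (simp add: assoc_E_def)
lemma aE_O: "j \<in> {1..n_out M} \<Longrightarrow> (a, b) \<in> EOi M j \<Longrightarrow> (CO j a, CO j b) \<in> assoc_E M"
  by (simp add: assoc_E_def)
lemma aE_P: "(a, b) \<in> pE M \<Longrightarrow> (CP a, CP b) \<in> assoc_E M"
  using rev_image_eqI[of "(a,b)" "pE M" "(CP a, CP b)" "map_prod CP CP"] by (simp add: assoc_E_def)
lemma aE_U: "i \<in> {1..n_in M} \<Longrightarrow> (CR i (vu M i), CP (PU i)) \<in> assoc_E M"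
  by (simp add: assoc_E_def)
lemma aE_Y: "j \<in> {1..n_out M} \<Longrightarrow> (CP (PY j), CO j (vy M j)) \<in> assoc_E M"
  by (simp add: assoc_E_def)
lemma aV_R: "i \<in> {1..n_in M} \<Longrightarrow> a \<in> Domain (ERi M i) \<union> Range (ERi M i) \<Longrightarrow> CR i a \<in> assoc_V M"
  by (simp add: assoc_V_def)
lemma aV_O: "j \<in> {1..n_out M} \<Longrightarrow> a \<in> Domain (EOi M j) \<union> Range (EOi M j) \<Longrightarrow> CO j a \<in> assoc_V M"
  by (simp add: assoc_V_def)
lemma aV_P: "a \<in> pV M \<Longrightarrow> CP a \<in> assoc_V M"
  by (simp add: assoc_V_def)

lemma path_from_edge:
  assumes "(v, v') \<in> E" "(v', t) \<in> E\<^sup>*"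
  shows "\<exists>ps. ps \<noteq> [] \<and> hd ps = v \<and> last ps = t \<and> distinct ps \<and> succE E ps \<and>
     set ps \<subseteq> Domain E \<union> Range E"
proof -
  have "(v, t) \<in> E\<^sup>*" using assms by (rule converse_rtrancl_into_rtrancl)
  from rtrancl_distinct_path[OF this] obtain ps where
    ps: "ps \<noteq> []" "hd ps = v" "last ps = t" "distinct ps" "succE E ps" by blast
  have "set (tl ps) \<subseteq> Range E" using succE_tl_Range[OF ps(5)] .
  moreover have "set ps = insert (hd ps) (set (tl ps))" using ps(1) by (cases ps) auto
  ultimately have "set ps \<subseteq> Domain E \<union> Range E" using ps(2) assms(1) by auto
  with ps show ?thesis by blast
qed

lemma phiR_edge: "i \<in> phiR M v \<Longrightarrow> \<exists>v'. (v, v') \<in> ERi M i"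
  unfolding phiR_def ERi_def sched_edges_def by blast
lemma phiO_edge: "j \<in> phiO M v \<Longrightarrow> \<exists>v'. (v, v') \<in> EOi M j"
  unfolding phiO_def EOi_def sched_edges_def by blast

lemma cpathR:
  assumes wf: "mcn_wf M" and i: "i \<in> phiR M v"
  shows "\<exists>ps. ps \<noteq> [] \<and> hd ps = v \<and> last ps = vu M i \<and> distinct ps \<and> succE (ERi M i) ps \<and>
     set ps \<subseteq> Domain (ERi M i) \<union> Range (ERi M i)"
proof -
  obtain v' where e: "(v, v') \<in> ERi M i" using phiR_edge[OF i] by blast
  have i': "i \<in> {1..n_in M}" using i phiR_sub[of M v] by blast
  have "path_dag (ERi M i) (vuc M) (vu M i)" using wf i' unfolding mcn_wf_def by blast
  then have "(v', vu M i) \<in> (ERi M i)\<^sup>*" using e unfolding path_dag_def by blast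
  from path_from_edge[OF e this] show ?thesis .
qed

lemma cpathO:
  assumes wf: "mcn_wf M" and j: "j \<in> phiO M v"
  shows "\<exists>ps. ps \<noteq> [] \<and> hd ps = v \<and> last ps = vyc M \<and> distinct ps \<and> succE (EOi M j) ps \<and>
     set ps \<subseteq> Domain (EOi M j) \<union> Range (EOi M j)"
proof -
  obtain v' where e: "(v, v') \<in> EOi M j" using phiO_edge[OF j] by blast
  have j': "j \<in> {1..n_out M}" using j phiO_sub[of M v] by blast
  have "path_dag (EOi M j) (vy M j) (vyc M)" using wf j' unfolding mcn_wf_def by blast
  then have "(v', vyc M) \<in> (EOi M j)\<^sup>*" using e unfolding path_dag_def by blast
  from path_from_edge[OF e this] show ?thesis .
qed

lemma cpathO_vy:
  assumes wf: "mcn_wf M" and j: "j \<in> {1..n_out M}"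
  shows "\<exists>ps. ps \<noteq> [] \<and> hd ps = vy M j \<and> last ps = vyc M \<and> distinct ps \<and> succE (EOi M j) ps \<and>
     set ps \<subseteq> Domain (EOi M j) \<union> Range (EOi M j)"
proof -
  have "path_dag (EOi M j) (vy M j) (vyc M)" using wf j unfolding mcn_wf_def by blast
  then have "(vy M j, vyc M) \<in> (EOi M j)\<^sup>+" unfolding path_dag_def by blast
  then obtain v' where e: "(vy M j, v') \<in> EOi M j" "(v', vyc M) \<in> (EOi M j)\<^sup>*"
    using tranclD by metis
  from path_from_edge[OF e] show ?thesis .
qed

lemma C_A_in:
  assumes wf: "mcn_wf M" and i: "i \<in> phiR M v" and pl: "ppath M pl i j" and j: "j \<in> {1..n_out M}"
  shows "\<exists>q. is_simple_path (assoc_V M) (assoc_E M) q \<and> hd q = CR i v \<and> last q = CO j (vyc M) \<and>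
     set q \<subseteq> range (CR i) \<union> CP ` set pl \<union> range (CO j)"
proof -
  have i': "i \<in> {1..n_in M}" using i phiR_sub[of M v] by blast
  obtain ps where ps: "ps \<noteq> []" "hd ps = v" "last ps = vu M i" "distinct ps" "succE (ERi M i) ps"
     "set ps \<subseteq> Domain (ERi M i) \<union> Range (ERi M i)" using cpathR[OF wf i] by blast
  obtain qs where qs: "qs \<noteq> []" "hd qs = vy M j" "last qs = vyc M" "distinct qs" "succE (EOi M j) qs"
     "set qs \<subseteq> Domain (EOi M j) \<union> Range (EOi M j)" using cpathO_vy[OF wf j] by blast
  define q :: "('a, 'b) cvert list" where "q = map (CR i) ps @ map CP pl @ map (CO j) qs"
  have s1: "succE (assoc_E M) (map (CR i) ps)" using ps(5) unfolding successively_map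
    by (auto elim: successively_mono intro: aE_R[OF i'])
  have s2: "succE (assoc_E M) (map CP pl)" using pl unfolding successively_map ppath_def
    by (auto elim: successively_mono intro: aE_P)
  have s3: "succE (assoc_E M) (map (CO j) qs)" using qs(5) unfolding successively_map
    by (auto elim: successively_mono intro: aE_O[OF j])
  have "succE (assoc_E M) q" unfolding q_def using s1 s2 s3 ps qs pl aE_U[OF i'] aE_Y[OF j]
    by (auto simp: successively_append_iff last_map hd_map ppath_def)
  moreover have "distinct q" using pl ps qs unfolding q_def ppath_def by (auto simp: distinct_map inj_on_def)
  moreover have "set q \<subseteq> assoc_V M"
  proof -
    have "set pl \<subseteq> pV M" using pl unfolding ppath_def by auto
    then show ?thesis using ps(6) qs(6) i' j unfolding q_def
      by (auto intro!: aV_R aV_O aV_P)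
  qed
  moreover have "q \<noteq> []" "hd q = CR i v" "last q = CO j (vyc M)"
    using ps qs unfolding q_def by (auto simp: hd_map last_map)
  moreover have "set q \<subseteq> range (CR i) \<union> CP ` set pl \<union> range (CO j)" unfolding q_def by auto
  ultimately show ?thesis unfolding simple_path_iff by blast
qed

lemma C_A_out:
  assumes wf: "mcn_wf M" and j: "j \<in> phiO M v"
  shows "\<exists>q. is_simple_path (assoc_V M) (assoc_E M) q \<and> hd q = CO j v \<and> last q = CO j (vyc M) \<and>
     set q \<subseteq> range (CO j)"
proof -
  have j': "j \<in> {1..n_out M}" using j phiO_sub[of M v] by blast
  obtain qs where qs: "qs \<noteq> []" "hd qs = v" "last qs = vyc M" "distinct qs" "succE (EOi M j) qs"
     "set qs \<subseteq> Domain (EOi M j) \<union> Range (EOi M j)" using cpathO[OF wf j] by blast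
  define q :: "('a, 'b) cvert list" where "q = map (CO j) qs"
  have "succE (assoc_E M) q" using qs(5) unfolding successively_map q_def
    by (auto elim: successively_mono intro: aE_O[OF j'])
  moreover have "distinct q" using qs unfolding q_def by (auto simp: distinct_map inj_on_def)
  moreover have "set q \<subseteq> assoc_V M" using qs(6) j' unfolding q_def by (auto intro!: aV_O)
  moreover have "q \<noteq> []" "hd q = CO j v" "last q = CO j (vyc M)"
    using qs unfolding q_def by (auto simp: hd_map last_map)
  moreover have "set q \<subseteq> range (CO j)" unfolding q_def by auto
  ultimately show ?thesis unfolding simple_path_iff by blast
qed




lemma sV_P_inv: "SP a \<in> struct_V M F \<Longrightarrow> a \<in> pV M"
  by (auto simp: struct_V_def)
lemma aV_P_inv: "CP a \<in> assoc_V M \<Longrightarrow> a \<in> pV M"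
  by (auto simp: assoc_V_def)

definition dS where "dS M F p x i pl j \<longleftrightarrow> x \<in> F \<and> hd p = fvert x \<and> last p = SY j \<and> j \<in> {1..n_out M} \<and>
  (case x of Inl v \<Rightarrow> i \<in> phiR M v \<and> ppath M pl i j \<and> SX i 1 \<in> set p \<and> SP ` set pl \<subseteq> set p
   | Inr v \<Rightarrow> j \<in> phiO M v)"

lemma S_decomp:
  assumes F: "F \<subseteq> Inl ` VR M \<union> Inr ` VO M"
    and p: "is_simple_path (struct_V M F) (struct_E M F) p" and h: "hd p \<in> fvert ` F"
    and l: "last p \<in> SY ` {1..n_out M}"
  shows "\<exists>x i pl j. dS M F p x i pl j"
proof -
  obtain x where x: "x \<in> F" "hd p = fvert x" using h by blast
  from p have pp: "p \<noteq> []" "set p \<subseteq> struct_V M F" "distinct p" "succE (struct_E M F) p"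
    unfolding simple_path_iff by auto
  obtain y p' where yp: "p = y # p'" using pp(1) by (cases p) auto
  have p'ne: "p' \<noteq> []" using yp x l by (cases x) auto
  have e: "(y, hd p') \<in> struct_E M F" and s': "succE (struct_E M F) p'"
    using pp(4) yp p'ne by (auto simp: successively_Cons)
  have lp': "last p' = last p" using yp p'ne by simp
  show ?thesis
  proof (cases x)
    case (Inl v)
    then have "y = SFR v" using x yp by simp
    then obtain i d where id: "hd p' = SX i d" "i \<in> phiR M v" using sE_SFR[of v "hd p'" M F] e by blast
    have "last p' \<in> range SY" using l lp' by auto
    from S_in[OF s' p'ne id(1) this] obtain pl xs rest j where
      A: "SX i 1 \<in> set p'" "pl \<noteq> []" "hd pl = PU i" "last pl = PY j" "j \<in> {1..n_out M}"
         "succE (pE M) pl" "p' = xs @ map SP pl @ rest" "last p' = SY j" by blast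
    have dpl: "distinct pl" using pp(3) yp A(7) by (simp add: distinct_map)
    have spl: "SP ` set pl \<subseteq> set p" using yp A(7) by auto
    have "set pl \<subseteq> pV M" using spl pp(2) sV_P_inv by blast
    then have "ppath M pl i j" using A dpl unfolding ppath_def by auto
    then have "dS M F p x i pl j" unfolding dS_def using x Inl id A spl yp lp' by auto
    then show ?thesis by blast
  next
    case (Inr v)
    then have "y = SFO v" using x yp by simp
    then obtain j d where jd: "hd p' = SX' j d" "j \<in> phiO M v" using sE_SFO[of v "hd p'" M F] e by blast
    have "set p' \<subseteq> range (SX' j) \<union> {SY j}" using S_out[OF s' p'ne] jd by auto
    then have "last p' \<in> range (SX' j) \<union> {SY j}" using p'ne last_in_set by blast
    then have "last p = SY j" using l lp' by auto
    moreover have "j \<in> {1..n_out M}" using jd phiO_sub[of M v] by blast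
    ultimately have "dS M F p x 0 [] j" unfolding dS_def using x Inr jd by auto
    then show ?thesis by blast
  qed
qed

definition dA where "dA M F g q x i pl j \<longleftrightarrow> x \<in> F \<and> hd q = g x \<and> last q = CO j (vyc M) \<and> j \<in> {1..n_out M} \<and>
  (case x of Inl v \<Rightarrow> hd q = CR i v \<and> i \<in> phiR M v \<and> ppath M pl i j \<and> CR i (vu M i) \<in> set q \<and> CP ` set pl \<subseteq> set q
   | Inr v \<Rightarrow> hd q = CO j v \<and> j \<in> phiO M v)"

lemma A_decomp:
  assumes g: "\<forall>x\<in>F. g x \<in> Gamma M x"
    and q: "is_simple_path (assoc_V M) (assoc_E M) q" and h: "hd q \<in> g ` F"
    and l: "last q \<in> (\<lambda>i. CO i (vyc M)) ` {1..n_out M}"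
  shows "\<exists>x i pl j. dA M F g q x i pl j"
proof -
  obtain x where x: "x \<in> F" "hd q = g x" using h by blast
  from q have qq: "q \<noteq> []" "set q \<subseteq> assoc_V M" "distinct q" "succE (assoc_E M) q"
    unfolding simple_path_iff by auto
  obtain j0 where j0: "last q = CO j0 (vyc M)" "j0 \<in> {1..n_out M}" using l by blast
  show ?thesis
  proof (cases x)
    case (Inl v)
    have "g x \<in> Gamma M (Inl v)" using g x Inl by auto
    then obtain i where i: "hd q = CR i v" "i \<in> phiR M v" using x by auto
    have "isCO (last q)" using j0 by (simp add: isCO_def)
    from A_in[OF qq(4) qq(1) i(1) this] obtain pl xs rest j where
      A: "CR i (vu M i) \<in> set q" "pl \<noteq> []" "hd pl = PU i" "last pl = PY j" "j \<in> {1..n_out M}"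
         "succE (pE M) pl" "q = xs @ map CP pl @ rest" "last q \<in> range (CO j)" by blast
    have jj: "j = j0" using A(8) j0 by auto
    have dpl: "distinct pl" using qq(3) A(7) by (simp add: distinct_map)
    have spl: "CP ` set pl \<subseteq> set q" using A(7) by auto
    have "set pl \<subseteq> pV M" using spl qq(2) aV_P_inv by blast
    then have "ppath M pl i j" using A dpl unfolding ppath_def by auto
    then have "dA M F g q x i pl j" unfolding dA_def using x Inl i A spl j0 jj by auto
    then show ?thesis by blast
  next
    case (Inr v)
    have "g x \<in> Gamma M (Inr v)" using g x Inr by auto
    then obtain j where j: "hd q = CO j v" "j \<in> phiO M v" using x by auto
    have "set q \<subseteq> range (CO j)" using A_out[OF qq(4) qq(1)] j by auto
    then have "last q \<in> range (CO j)" using qq(1) last_in_set by blast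
    then have "j = j0" using j0 by auto
    then have "dA M F g q x 0 [] j" unfolding dA_def using x Inr j j0 by auto
    then show ?thesis by blast
  qed
qed




definition regS :: "'a + 'b \<Rightarrow> nat \<Rightarrow> pvert list \<Rightarrow> nat \<Rightarrow> ('a, 'b) svert set" where
  "regS x i pl j = (case x of Inl v \<Rightarrow> {SFR v} \<union> range (SX i) \<union> SP ` set pl \<union> range (SX' j) \<union> {SY j}
     | Inr v \<Rightarrow> {SFO v} \<union> range (SX' j) \<union> {SY j})"
definition regA :: "'a + 'b \<Rightarrow> nat \<Rightarrow> pvert list \<Rightarrow> nat \<Rightarrow> ('a, 'b) cvert set" where
  "regA x i pl j = (case x of Inl v \<Rightarrow> range (CR i) \<union> CP ` set pl \<union> range (CO j)
     | Inr v \<Rightarrow> range (CO j))"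

lemma regS_disj: "x \<noteq> x' \<Longrightarrow> j \<noteq> j' \<Longrightarrow> (isl x \<and> isl x' \<longrightarrow> i \<noteq> i' \<and> set pl \<inter> set pl' = {}) \<Longrightarrow>
   regS x i pl j \<inter> regS x' i' pl' j' = {}"
  by (cases x; cases x') (auto simp: regS_def)
lemma regA_disj: "j \<noteq> j' \<Longrightarrow> (isl x \<and> isl x' \<longrightarrow> i \<noteq> i' \<and> set pl \<inter> set pl' = {}) \<Longrightarrow>
   regA x i pl j \<inter> regA x' i' pl' j' = {}"
  by (cases x; cases x') (auto simp: regA_def)

definition tS where "tS M F x i pl j p \<longleftrightarrow> is_simple_path (struct_V M F) (struct_E M F) p \<and>
   hd p = fvert x \<and> last p = SY j \<and> set p \<subseteq> regS x i pl j"
definition tA where "tA M x i pl j q \<longleftrightarrow> is_simple_path (assoc_V M) (assoc_E M) q \<and>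
   hd q = (case x of Inl v \<Rightarrow> CR i v | Inr v \<Rightarrow> CO j v) \<and> last q = CO j (vyc M) \<and> set q \<subseteq> regA x i pl j"

lemma exS:
  assumes wf: "mcn_wf M" and F: "F \<subseteq> Inl ` VR M \<union> Inr ` VO M" and d: "dA M F g q x i pl j"
  shows "\<exists>p. tS M F x i pl j p"
proof (cases x)
  case (Inl v)
  then have "Inl v \<in> F" "i \<in> phiR M v" "ppath M pl i j" "j \<in> {1..n_out M}" using d unfolding dA_def by auto
  from C_S_in[OF wf F this] show ?thesis unfolding tS_def regS_def using Inl by auto
next
  case (Inr v)
  then have "Inr v \<in> F" "j \<in> phiO M v" using d unfolding dA_def by auto
  from C_S_out[OF wf F this] show ?thesis unfolding tS_def regS_def using Inr by auto
qed

lemma exA: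
  assumes wf: "mcn_wf M" and d: "dS M F p x i pl j"
  shows "\<exists>q. tA M x i pl j q"
proof (cases x)
  case (Inl v)
  then have "i \<in> phiR M v" "ppath M pl i j" "j \<in> {1..n_out M}" using d unfolding dS_def by auto
  from C_A_in[OF wf this] show ?thesis unfolding tA_def regA_def using Inl by auto
next
  case (Inr v)
  then have "j \<in> phiO M v" using d unfolding dS_def by auto
  from C_A_out[OF wf this] show ?thesis unfolding tA_def regA_def using Inr by auto
qed

lemma dir2:
  assumes wf: "mcn_wf M" and F: "F \<subseteq> Inl ` VR M \<union> Inr ` VO M"
    and g: "\<forall>x\<in>F. g x \<in> Gamma M x"
    and L: "has_linking (assoc_V M) (assoc_E M) (card F) (g ` F) ((\<lambda>i. CO i (vyc M)) ` {1..n_out M})"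
  shows "has_linking (struct_V M F) (struct_E M F) (card F) (fvert ` F) (SY ` {1..n_out M})"
proof -
  obtain P where P: "finite P" "card P = card F"
    "\<And>q. q \<in> P \<Longrightarrow> is_simple_path (assoc_V M) (assoc_E M) q \<and> hd q \<in> g ` F \<and> last q \<in> (\<lambda>i. CO i (vyc M)) ` {1..n_out M}"
    "\<And>q q'. q \<in> P \<Longrightarrow> q' \<in> P \<Longrightarrow> q \<noteq> q' \<Longrightarrow> set q \<inter> set q' = {}"
    using L unfolding has_linking_def by metis
  have "\<forall>q\<in>P. \<exists>x i pl j. dA M F g q x i pl j" using A_decomp[OF g] P(3) by blast
  then obtain X I PL J where D: "\<And>q. q \<in> P \<Longrightarrow> dA M F g q (X q) (I q) (PL q) (J q)" by metis
  have "\<forall>q\<in>P. \<exists>p. tS M F (X q) (I q) (PL q) (J q) p" using exS[OF wf F] D by blast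
  then obtain T where T: "\<And>q. q \<in> P \<Longrightarrow> tS M F (X q) (I q) (PL q) (J q) (T q)" by metis
  have "has_linking (struct_V M F) (struct_E M F) (card P) (fvert ` F) (SY ` {1..n_out M})"
  proof (rule linking_transfer[OF P(1)])
    fix q assume q: "q \<in> P"
    show "is_simple_path (struct_V M F) (struct_E M F) (T q) \<and> hd (T q) \<in> fvert ` F \<and> last (T q) \<in> SY ` {1..n_out M}"
      using T[OF q] D[OF q] unfolding tS_def dA_def by auto
  next
    fix q q' assume q: "q \<in> P" "q' \<in> P" "q \<noteq> q'"
    have dis: "set q \<inter> set q' = {}" using P(4)[OF q] .
    have ne: "q \<noteq> []" "q' \<noteq> []" using P(3) q unfolding is_simple_path_def by auto
    have dq: "dA M F g q (X q) (I q) (PL q) (J q)" "dA M F g q' (X q') (I q') (PL q') (J q')"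
      using D q by auto
    have "hd q \<noteq> hd q'" using dis ne hd_in_set by fastforce
    then have xx: "X q \<noteq> X q'" using dq unfolding dA_def by auto
    have "last q \<noteq> last q'" using dis ne last_in_set by fastforce
    then have jj: "J q \<noteq> J q'" using dq unfolding dA_def by auto
    have ii: "isl (X q) \<and> isl (X q') \<longrightarrow> I q \<noteq> I q' \<and> set (PL q) \<inter> set (PL q') = {}"
    proof
      assume "isl (X q) \<and> isl (X q')"
      then obtain v v' where v: "X q = Inl v" "X q' = Inl v'" by (meson isl_def)
      have A: "CR (I q) (vu M (I q)) \<in> set q" "CP ` set (PL q) \<subseteq> set q"
        "CR (I q') (vu M (I q')) \<in> set q'" "CP ` set (PL q') \<subseteq> set q'"
        using dq v unfolding dA_def by auto
      show "I q \<noteq> I q' \<and> set (PL q) \<inter> set (PL q') = {}"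
        using A dis by auto
    qed
    have "set (T q) \<subseteq> regS (X q) (I q) (PL q) (J q)" "set (T q') \<subseteq> regS (X q') (I q') (PL q') (J q')"
      using T q unfolding tS_def by auto
    then show "set (T q) \<inter> set (T q') = {}" using regS_disj[OF xx jj ii] by blast
  qed
  then show ?thesis using P(2) by simp
qed




lemma fvert_inj: "inj fvert"
proof (rule injI)
  fix x y :: "'a + 'b" assume "fvert x = fvert y" then show "x = y" by (cases x; cases y) auto
qed

lemma dir1:
  assumes wf: "mcn_wf M" and F: "F \<subseteq> Inl ` VR M \<union> Inr ` VO M"
    and L: "has_linking (struct_V M F) (struct_E M F) (card F) (fvert ` F) (SY ` {1..n_out M})"
  shows "\<exists>g. (\<forall>v\<in>F. g v \<in> Gamma M v) \<and>
            has_linking (assoc_V M) (assoc_E M) (card F) (g ` F) ((\<lambda>i. CO i (vyc M)) ` {1..n_out M})"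
proof -
  obtain P where P: "finite P" "card P = card F"
    "\<And>p. p \<in> P \<Longrightarrow> is_simple_path (struct_V M F) (struct_E M F) p \<and> hd p \<in> fvert ` F \<and> last p \<in> SY ` {1..n_out M}"
    "\<And>p q. p \<in> P \<Longrightarrow> q \<in> P \<Longrightarrow> p \<noteq> q \<Longrightarrow> set p \<inter> set q = {}"
    using L unfolding has_linking_def by metis
  have "\<forall>p\<in>P. \<exists>x i pl j. dS M F p x i pl j" using S_decomp[OF F] P(3) by blast
  then obtain X I PL J where D: "\<And>p. p \<in> P \<Longrightarrow> dS M F p (X p) (I p) (PL p) (J p)" by metis
  have "\<forall>p\<in>P. \<exists>q. tA M (X p) (I p) (PL p) (J p) q" using exA[OF wf] D by blast
  then obtain T where T: "\<And>p. p \<in> P \<Longrightarrow> tA M (X p) (I p) (PL p) (J p) (T p)" by metis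
  have finF: "finite F"
  proof -
    have "finite (VR M)" "finite (VO M)" using wf unfolding mcn_wf_def by blast+
    then show ?thesis using finite_subset[OF F] by simp
  qed
  have ne: "\<And>p. p \<in> P \<Longrightarrow> p \<noteq> []" using P(3) unfolding is_simple_path_def by auto
  have injhd: "inj_on hd P"
  proof (rule inj_onI, rule ccontr)
    fix p q assume "p \<in> P" "q \<in> P" "hd p = hd q" "p \<noteq> q"
    with P(4) ne show False by (metis disjoint_iff hd_in_set)
  qed
  have cov: "hd ` P = fvert ` F"
  proof (rule card_subset_eq)
    show "finite (fvert ` F)" using finF by simp
    show "hd ` P \<subseteq> fvert ` F" using P(3) by auto
    have "card (fvert ` F) = card F" using card_image[OF inj_on_subset[OF fvert_inj subset_UNIV]] .
    then show "card (hd ` P) = card (fvert ` F)" using card_image[OF injhd] P(2) by simp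
  qed
  define pick where "pick x = (SOME p. p \<in> P \<and> hd p = fvert x)" for x
  have pick: "pick x \<in> P \<and> hd (pick x) = fvert x" if "x \<in> F" for x
  proof -
    have "fvert x \<in> hd ` P" using cov that by simp
    then have "\<exists>p. p \<in> P \<and> hd p = fvert x" by force
    then show ?thesis unfolding pick_def by (rule someI_ex)
  qed
  have Xp: "X p \<in> F \<and> hd p = fvert (X p)" if "p \<in> P" for p using D[OF that] unfolding dS_def by auto
  have pickX: "pick (X p) = p" if "p \<in> P" for p
  proof -
    have a: "pick (X p) \<in> P" "hd (pick (X p)) = fvert (X p)" using pick[of "X p"] Xp[OF that] by auto
    show ?thesis using inj_onD[OF injhd _ a(1) that] a(2) Xp[OF that] by simp
  qed
  define g where "g x = hd (T (pick x))" for x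
  have gG: "\<forall>x\<in>F. g x \<in> Gamma M x"
  proof
    fix x assume x: "x \<in> F"
    let ?p = "pick x"
    have p: "?p \<in> P" "hd ?p = fvert x" using pick[OF x] by auto
    have "X ?p = x" using Xp[OF p(1)] p(2) injD[OF fvert_inj] by metis
    have d: "dS M F ?p x (I ?p) (PL ?p) (J ?p)" using D[OF p(1)] \<open>X ?p = x\<close> by simp
    have t: "tA M x (I ?p) (PL ?p) (J ?p) (T ?p)" using T[OF p(1)] \<open>X ?p = x\<close> by simp
    show "g x \<in> Gamma M x"
    proof (cases x)
      case (Inl v)
      then have "I ?p \<in> phiR M v" "hd (T ?p) = CR (I ?p) v" using d t unfolding dS_def tA_def by auto
      then show ?thesis unfolding g_def using Inl by auto
    next
      case (Inr v)
      then have "J ?p \<in> phiO M v" "hd (T ?p) = CO (J ?p) v" using d t unfolding dS_def tA_def by auto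
      then show ?thesis unfolding g_def using Inr by auto
    qed
  qed
  have "has_linking (assoc_V M) (assoc_E M) (card P) (g ` F) ((\<lambda>i. CO i (vyc M)) ` {1..n_out M})"
  proof (rule linking_transfer[OF P(1)])
    fix p assume p: "p \<in> P"
    have "g (X p) = hd (T p)" unfolding g_def using pickX[OF p] by simp
    moreover have "g (X p) \<in> g ` F" using Xp[OF p] by simp
    ultimately have "hd (T p) \<in> g ` F" by simp
    then show "is_simple_path (assoc_V M) (assoc_E M) (T p) \<and> hd (T p) \<in> g ` F \<and> last (T p) \<in> (\<lambda>i. CO i (vyc M)) ` {1..n_out M}"
      using T[OF p] D[OF p] unfolding tA_def dS_def by auto
  next
    fix p q assume q: "p \<in> P" "q \<in> P" "p \<noteq> q"
    have dis: "set p \<inter> set q = {}" using P(4)[OF q] .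
    have dq: "dS M F p (X p) (I p) (PL p) (J p)" "dS M F q (X q) (I q) (PL q) (J q)"
      using D q by auto
    have "last p \<in> set p" by (rule last_in_set[OF ne[OF q(1)]])
    have "last q \<in> set q" by (rule last_in_set[OF ne[OF q(2)]])
    then have "last p \<noteq> last q" using dis \<open>last p \<in> set p\<close> by (metis disjoint_iff)
    then have jj: "J p \<noteq> J q" using dq unfolding dS_def by auto
    have ii: "isl (X p) \<and> isl (X q) \<longrightarrow> I p \<noteq> I q \<and> set (PL p) \<inter> set (PL q) = {}"
    proof
      assume "isl (X p) \<and> isl (X q)"
      then obtain v v' where v: "X p = Inl v" "X q = Inl v'" by (meson isl_def)
      have A: "SX (I p) 1 \<in> set p" "SP ` set (PL p) \<subseteq> set p"
        "SX (I q) 1 \<in> set q" "SP ` set (PL q) \<subseteq> set q"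
        using dq v unfolding dS_def by auto
      show "I p \<noteq> I q \<and> set (PL p) \<inter> set (PL q) = {}"
        using A dis by auto
    qed
    have "set (T p) \<subseteq> regA (X p) (I p) (PL p) (J p)" "set (T q) \<subseteq> regA (X q) (I q) (PL q) (J q)"
      using T q unfolding tA_def by auto
    then show "set (T p) \<inter> set (T q) = {}" using regA_disj[OF jj ii] by blast
  qed
  then show ?thesis using P(2) gG by (intro exI[of _ g]) simp
qed

theorem theorem2:
  fixes M :: "('a, 'b) mcn" and F :: "('a + 'b) set"
  assumes "mcn_wf M"
    and "F \<subseteq> Inl ` VR M \<union> Inr ` VO M"
  shows "has_linking (struct_V M F) (struct_E M F) (card F) (fvert ` F) (SY ` {1..n_out M})
     \<longleftrightarrow> (\<exists>g. (\<forall>v\<in>F. g v \<in> Gamma M v) \<and>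
            has_linking (assoc_V M) (assoc_E M) (card F) (g ` F) ((\<lambda>i. CO i (vyc M)) ` {1..n_out M}))"
  using dir1[OF assms] dir2[OF assms] by blast


end
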